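(* Let $\alpha>-1$ and let $n\ge 0$ be an integer, and let $\lambda_s$ be the smallest eigenvalue of the real symmetric matrix $\big((\alpha+1)_{j+k}\big)_{j,k=0}^{n}$. Then \[ \lambda_s\ \ge\ \left\{\sum_{\ell=0}^{n}\frac{\ell!}{(\alpha+1)_\ell}\,\big(L_\ell^{(\alpha)}(-1)\big)^2\right\}^{-1} =\frac{(\alpha+1)_n}{(n+1)!}\cdot\frac{1}{L_n^{(\alpha+1)}(-1)\,L_n^{(\alpha)}(-1)-L_{n+1}^{(\alpha)}(-1)\,L_{n-1}^{(\alpha+1)}(-1)} . \]
   Context: $(z)_m=z(z+1)\cdots(z+m-1)$, $(z)_0=1$. The Laguerre polynomials are $L_n^{(\alpha)}(x)=\frac{(\alpha+1)_n}{n!}\sum_{k=0}^{n}\frac{(-n)_k\,x^k}{(\alpha+1)_k\,k!}$ for $n\ge0$, with the convention $L_{-1}^{(\alpha)}(x)=0$. *)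

theory Defs
  imports Complex_Main "Jordan_Normal_Form.Char_Poly"
begin

definition laguerre :: "int \<Rightarrow> real \<Rightarrow> real \<Rightarrow> real" where
  "laguerre n a x = (if n < 0 then 0 else
     pochhammer (a + 1) (nat n) / fact (nat n) *
     (\<Sum>k = 0..nat n. pochhammer (- of_int n) k * x ^ k / (pochhammer (a + 1) k * fact k)))"

definition hankel_poch :: "real \<Rightarrow> nat \<Rightarrow> real mat" where
  "hankel_poch a n = mat (n + 1) (n + 1) (\<lambda>(j, k). pochhammer (a + 1) (j + k))"

end

theory Submission
  imports Defs
begin

definition cc :: "real \<Rightarrow> nat \<Rightarrow> nat \<Rightarrow> real" where
  "cc a n j = (if j \<le> n then pochhammer (a + of_nat j) (n - j) / (fact j * fact (n - j)) else 0)"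
definition FF :: "real \<Rightarrow> nat \<Rightarrow> real \<Rightarrow> real" where
  "FF a n y = (\<Sum>j\<le>n. cc a n j * y^j)"

lemma FF_ext: "n \<le> N \<Longrightarrow> FF a n y = (\<Sum>j\<le>N. cc a n j * y^j)"
  unfolding FF_def by (rule sum.mono_neutral_left) (auto simp: cc_def)

lemma R1_coeff: "cc a (Suc n) j = cc (a+1) (Suc n) j - cc (a+1) n j"
proof (cases "j \<le> n")
  case True
  then obtain m where n: "n = j + m" using le_Suc_ex by blast
  define P where "P = pochhammer (a + 1 + of_nat j) m"
  define d where "d = fact j * (fact m :: real)"
  have d: "d > 0" unfolding d_def by simp
  have nn: "Suc n - j = Suc m" "n - j = m" using n by auto
  have h1: "cc a (Suc n) j = (a + of_nat j) * P / (d * (1 + of_nat m))"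
    using True unfolding cc_def nn P_def d_def
    by (simp add: pochhammer_rec fact_Suc add_ac)
  have h2: "cc (a+1) (Suc n) j = P * (a + 1 + of_nat j + of_nat m) / (d * (1 + of_nat m))"
    using True unfolding cc_def nn P_def d_def
    by (simp add: pochhammer_Suc fact_Suc add_ac)
  have h3: "cc (a+1) n j = P / d"
    using True unfolding cc_def nn P_def d_def by simp
  have m: "1 + real m > 0" by simp
  have h3': "cc (a+1) n j = P * (1 + of_nat m) / (d * (1 + of_nat m))"
    unfolding h3 using m by simp
  have r: "(a + of_nat j) * P = P * (a + 1 + of_nat j + of_nat m) - P * (1 + of_nat m)"
    by (simp add: algebra_simps)
  show ?thesis unfolding h1 h2 h3' r by (simp add: diff_divide_distrib)
next
  case False
  then show ?thesis
    by (cases "j = Suc n") (auto simp: cc_def)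
qed

lemma R1: "FF a (Suc n) y = FF (a+1) (Suc n) y - FF (a+1) n y"
proof -
  have "FF a (Suc n) y = (\<Sum>j\<le>Suc n. (cc (a+1) (Suc n) j - cc (a+1) n j) * y^j)"
    unfolding FF_def by (rule sum.cong[OF refl]) (simp only: R1_coeff[of a n])
  also have "\<dots> = FF (a+1) (Suc n) y - FF (a+1) n y"
    by (simp only: left_diff_distrib sum_subtractf FF_def[of "a+1" "Suc n"]
        FF_ext[of n "Suc n" "a+1" y, OF le_SucI[OF order_refl]])
  finally show ?thesis .
qed

lemma R2_coeff: "of_nat (Suc n) * cc a (Suc n) j = (of_nat n + a) * cc a n j + (if j = 0 then 0 else cc (a+1) n (j - 1))"
proof -
  consider "j = 0" | "0 < j \<and> j \<le> n" | "j = Suc n" | "j > Suc n" by linarith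
  then show ?thesis
  proof cases
    case 1
    have h1: "cc a (Suc n) j = pochhammer a n * (a + of_nat n) / ((1 + of_nat n) * fact n)"
      using 1 unfolding cc_def by (simp add: pochhammer_Suc fact_Suc)
    have h2: "cc a n j = pochhammer a n / fact n"
      using 1 unfolding cc_def by simp
    have f: "fact n > (0::real)" "1 + real n > 0" by auto
    have "of_nat (Suc n) * cc a (Suc n) j = pochhammer a n * (a + of_nat n) / fact n"
      unfolding h1 using f by simp
    then show ?thesis unfolding h2 using 1 f by (simp add: algebra_simps)
  next
    case 2
    then obtain i m where j: "j = Suc i" and n: "n = Suc i + m"
      by (metis Suc_pred le_Suc_ex)
    define P where "P = pochhammer (a + of_nat (Suc i)) m"
    define d where "d = fact i * (fact m :: real)"
    have d: "d > 0" unfolding d_def by simp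
    have nn: "Suc n - j = Suc m" "n - j = m" "n - (j - 1) = Suc m" "j - 1 = i" using n j by auto
    have h1: "cc a (Suc n) j = P * (a + of_nat (Suc i) + of_nat m) / ((1 + of_nat i) * d * (1 + of_nat m))"
      unfolding cc_def nn P_def d_def using n j by (simp add: pochhammer_Suc fact_Suc)
    have h2: "cc a n j = P / ((1 + of_nat i) * d)"
      unfolding cc_def nn P_def d_def using n j by (simp add: fact_Suc)
    have h3: "cc (a+1) n (j - 1) = P * (a + of_nat (Suc i) + of_nat m) / (d * (1 + of_nat m))"
      unfolding cc_def nn P_def d_def using n j by (simp add: pochhammer_Suc fact_Suc add_ac)
    have m: "1 + real m > 0" "1 + real i > 0" by auto
    define e where "e = (1 + of_nat i) * d * (1 + of_nat m)"
    have h2': "cc a n j = P * (1 + of_nat m) / e"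
      unfolding h2 e_def using m by simp
    have h3': "cc (a+1) n (j - 1) = P * (a + of_nat (Suc i) + of_nat m) * (1 + of_nat i) / e"
      unfolding h3 e_def using m by simp
    have h1': "cc a (Suc n) j = P * (a + of_nat (Suc i) + of_nat m) / e"
      unfolding h1 e_def by simp
    have r: "of_nat (Suc n) * (P * (a + of_nat (Suc i) + of_nat m)) =
       (of_nat n + a) * (P * (1 + of_nat m)) + P * (a + of_nat (Suc i) + of_nat m) * (1 + of_nat i)"
      using n by (simp add: algebra_simps)
    have "of_nat (Suc n) * cc a (Suc n) j = (of_nat (Suc n) * (P * (a + of_nat (Suc i) + of_nat m))) / e"
      by (simp only: h1' times_divide_eq_right)
    also have "\<dots> = ((of_nat n + a) * (P * (1 + of_nat m)) + P * (a + of_nat (Suc i) + of_nat m) * (1 + of_nat i)) / e"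
      by (simp only: r)
    also have "\<dots> = (of_nat n + a) * cc a n j + cc (a+1) n (j - 1)"
      by (simp only: h2' h3' add_divide_distrib times_divide_eq_right)
    finally have "of_nat (Suc n) * cc a (Suc n) j = (of_nat n + a) * cc a n j + cc (a+1) n (j - 1)" .
    then show ?thesis using j by simp
  next
    case 3
    have "(fact (Suc n) :: real) = of_nat (Suc n) * fact n" by (simp only: fact_Suc)
    moreover have "of_nat (Suc n) \<noteq> (0::real)" "(fact n :: real) \<noteq> 0" by auto
    ultimately show ?thesis using 3 by (simp add: cc_def)
  next
    case 4 then show ?thesis by (simp add: cc_def)
  qed
qed

lemma R2: "of_nat (Suc n) * FF a (Suc n) y = (of_nat n + a) * FF a n y + y * FF (a+1) n y"
proof -
  have s: "y * FF (a+1) n y = (\<Sum>j\<le>Suc n. (if j = 0 then 0 else cc (a+1) n (j - 1)) * y^j)"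
    unfolding FF_def sum_distrib_left
    by (subst sum.atMost_Suc_shift) (simp add: algebra_simps)
  have "of_nat (Suc n) * FF a (Suc n) y = (\<Sum>j\<le>Suc n. (of_nat (Suc n) * cc a (Suc n) j) * y^j)"
    unfolding FF_def sum_distrib_left by (simp add: mult.assoc)
  also have "\<dots> = (\<Sum>j\<le>Suc n. (of_nat n + a) * (cc a n j * y^j) + (if j = 0 then 0 else cc (a+1) n (j - 1)) * y^j)"
    unfolding R2_coeff by (simp add: algebra_simps)
  also have "\<dots> = (of_nat n + a) * (\<Sum>j\<le>Suc n. cc a n j * y^j) + (\<Sum>j\<le>Suc n. (if j = 0 then 0 else cc (a+1) n (j - 1)) * y^j)"
    by (simp only: sum.distrib sum_distrib_left)
  also have "\<dots> = (of_nat n + a) * FF a n y + y * FF (a+1) n y"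
    using s FF_ext[of n "Suc n"] by simp
  finally show ?thesis .
qed

lemma FF_0: "FF a 0 y = 1"
  by (simp add: FF_def cc_def)


lemma key_alg:
  fixes a y N F0 F1 F2 Gm G0 G1 :: real
  assumes "F1 = G1 - G0" "F0 = G0 - Gm" "(N + 1) * F1 = (N + a) * F0 + y * G0"
    "(N + 2) * F2 = (N + 1 + a) * F1 + y * G1"
  shows "(N + 2) * (G1 * F1 - F2 * G0) = (a + N) * (G0 * F0 - F1 * Gm) + F1^2"
proof -
  have "(N + 2) * (G1 * F1 - F2 * G0) = (N + 2) * G1 * F1 - G0 * ((N + 2) * F2)"
    by (simp add: algebra_simps)
  also have "\<dots> = (N + 2) * G1 * F1 - G0 * ((N + 1 + a) * F1 + y * G1)"
    by (simp only: assms(4))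
  also have "\<dots> = (N + 2) * G1 * F1 - G0 * ((N + 1 + a) * F1) - G1 * (y * G0)"
    by (simp add: algebra_simps)
  also have "\<dots> = (N + 2) * G1 * F1 - G0 * ((N + 1 + a) * F1) - G1 * ((N + 1) * F1 - (N + a) * F0)"
  proof -
    have yg: "y * G0 = (N + 1) * F1 - (N + a) * F0" using assms(3) by linarith
    show ?thesis by (simp only: yg)
  qed
  also have "\<dots> = (a + N) * (G0 * F0 - F1 * Gm) + F1^2"
  proof -
    have g1: "G1 = F1 + G0" and gm: "Gm = G0 - F0" using assms(1,2) by linarith+
    show ?thesis unfolding g1 gm power2_eq_square by (simp add: ring_distribs)
  qed
  finally show ?thesis .
qed


lemma lag_FF:
  assumes "b > 0"
  shows "laguerre (int n) (b - 1) x = FF b n (-x)"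
proof -
  have t: "pochhammer b n / fact n * (pochhammer (- of_int (int n)) k * x ^ k / (pochhammer b k * fact k))
      = cc b n k * (-x)^k" if k: "k \<le> n" for k
  proof -
    have p: "pochhammer (- of_nat n) k = (-1)^k * fact k * (of_nat (n choose k) :: real)"
      unfolding binomial_gbinomial gbinomial_pochhammer by (simp add: power_mult_distrib[symmetric])
    have bf: "(of_nat (n choose k) :: real) = fact n / (fact k * fact (n - k))"
      using k by (rule binomial_fact)
    have pp: "pochhammer b n = pochhammer b k * pochhammer (b + of_nat k) (n - k)"
      using k by (rule pochhammer_product)
    have pos: "pochhammer b k > 0" using assms by (simp add: pochhammer_pos)
    have p': "pochhammer (- of_int (int n)) k = (-1)^k * fact k * (of_nat (n choose k) :: real)"
      using p by simp
    have aux: "P * Q / A * (s * B * (A / (B * C)) * z / (P * B)) = Q / (B * C) * (s * z)"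
      if "P \<noteq> 0" "A \<noteq> 0" "B \<noteq> 0" "C \<noteq> 0" for P Q A B C s z :: real
      using that by (simp add: field_simps)
    have "pochhammer b k * pochhammer (b + of_nat k) (n - k) / fact n *
        ((-1)^k * fact k * (fact n / (fact k * fact (n - k))) * x^k / (pochhammer b k * fact k))
       = pochhammer (b + of_nat k) (n - k) / (fact k * fact (n - k)) * ((-1)^k * x^k)"
      by (rule aux) (use pos in auto)
    then show ?thesis using k unfolding cc_def p' bf pp power_minus[of x k] by simp
  qed
  have "laguerre (int n) (b - 1) x = pochhammer b n / fact n *
     (\<Sum>k = 0..n. pochhammer (- of_int (int n)) k * x ^ k / (pochhammer b k * fact k))"
    unfolding laguerre_def by simp
  also have "\<dots> = (\<Sum>k\<le>n. pochhammer b n / fact n *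
     (pochhammer (- of_int (int n)) k * x ^ k / (pochhammer b k * fact k)))"
    by (simp only: sum_distrib_left atLeast0AtMost)
  also have "\<dots> = FF b n (-x)"
    unfolding FF_def by (rule sum.cong) (auto simp only: t atMost_iff)
  finally show ?thesis .
qed

lemma CD_sum:
  assumes a: "a > 0"
  shows "(\<Sum>m\<le>n. fact m / pochhammer a m * (FF a m y)^2)
    = fact (Suc n) / pochhammer a n * (FF (a+1) n y * FF a n y - FF a (Suc n) y * (if n = 0 then 0 else FF (a+1) (n-1) y))"
proof (induction n)
  case 0
  then show ?case by (simp add: FF_0)
next
  case (Suc n)
  define F0 F1 F2 Gm G0 G1 where "F0 = FF a n y" "F1 = FF a (Suc n) y" "F2 = FF a (Suc (Suc n)) y"
    "Gm = (if n = 0 then 0 else FF (a+1) (n-1) y)" "G0 = FF (a+1) n y" "G1 = FF (a+1) (Suc n) y"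
  have h1: "F1 = G1 - G0" unfolding F0_F1_F2_Gm_G0_G1_def by (rule R1)
  have h2: "F0 = G0 - Gm"
  proof (cases n)
    case 0 then show ?thesis unfolding F0_F1_F2_Gm_G0_G1_def by (simp add: FF_0)
  next
    case (Suc k) then show ?thesis unfolding F0_F1_F2_Gm_G0_G1_def using R1[of a k y] by simp
  qed
  have h3: "(real n + 1) * F1 = (real n + a) * F0 + y * G0"
    unfolding F0_F1_F2_Gm_G0_G1_def using R2[of n a y] by (simp add: add.commute)
  have h4: "(real n + 2) * F2 = (real n + 1 + a) * F1 + y * G1"
    unfolding F0_F1_F2_Gm_G0_G1_def using R2[of "Suc n" a y] by (simp add: add_ac)
  have k: "(real n + 2) * (G1 * F1 - F2 * G0) = (a + real n) * (G0 * F0 - F1 * Gm) + F1^2"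
    by (rule key_alg[OF h1 h2 h3 h4])
  define p where "p = pochhammer a n"
  have p: "p > 0" unfolding p_def using a by (simp add: pochhammer_pos)
  have an: "a + real n > 0" using a by simp
  have ps: "pochhammer a (Suc n) = p * (a + real n)" unfolding p_def by (simp add: pochhammer_Suc)
  have fs: "(fact (Suc (Suc n)) :: real) = (real n + 2) * fact (Suc n)"
    by (simp add: fact_Suc add_ac)
  have IH: "(\<Sum>m\<le>n. fact m / pochhammer a m * (FF a m y)^2) = fact (Suc n) / p * (G0 * F0 - F1 * Gm)"
    using Suc.IH unfolding F0_F1_F2_Gm_G0_G1_def p_def by simp
  have "(\<Sum>m\<le>Suc n. fact m / pochhammer a m * (FF a m y)^2)
      = fact (Suc n) / p * (G0 * F0 - F1 * Gm) + fact (Suc n) / (p * (a + real n)) * F1^2"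
    using IH ps unfolding F0_F1_F2_Gm_G0_G1_def by simp
  also have "\<dots> = fact (Suc n) / (p * (a + real n)) * ((a + real n) * (G0 * F0 - F1 * Gm) + F1^2)"
  proof -
    have gen: "c / p * Y + c / (p * e) * Z = c / (p * e) * (e * Y + Z)" if "p \<noteq> 0" "e \<noteq> 0"
      for c p e Y Z :: real using that by (simp add: field_simps)
    show ?thesis by (rule gen) (use p an in auto)
  qed
  also have "\<dots> = fact (Suc (Suc n)) / (p * (a + real n)) * (G1 * F1 - F2 * G0)"
    unfolding k[symmetric] fs by simp
  finally show ?case unfolding F0_F1_F2_Gm_G0_G1_def ps by simp
qed


definition EE :: "nat \<Rightarrow> (nat \<Rightarrow> real) \<Rightarrow> real" where
  "EE m p = (\<Sum>j\<le>m. (-1)^j * of_nat (m choose j) * p j)"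

lemma EE_Suc: "EE (Suc m) p = - EE m (\<lambda>j. p (Suc j) - p j)"
proof -
  define A where "A = (\<Sum>i\<le>m. (-1)^i * of_nat (m choose i) * p (Suc i))"
  have s1: "EE (Suc m) p = p 0 + (\<Sum>i\<le>m. (-1)^(Suc i) * of_nat (Suc m choose Suc i) * p (Suc i))"
    unfolding EE_def by (subst sum.atMost_Suc_shift) simp
  have pw: "(-1)^(Suc i) * of_nat (Suc m choose Suc i) * p (Suc i) = - ((-1)^i * of_nat (m choose i) * p (Suc i))
       + (-1)^(Suc i) * of_nat (m choose Suc i) * p (Suc i)" for i
    by (simp add: ring_distribs)
  have s2: "p 0 + (\<Sum>i\<le>m. (-1)^(Suc i) * of_nat (m choose Suc i) * p (Suc i)) = EE m p"
  proof -
    have "p 0 + (\<Sum>i\<le>m. (-1)^(Suc i) * of_nat (m choose Suc i) * p (Suc i))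
      = (\<Sum>j\<le>Suc m. (-1)^j * of_nat (m choose j) * p j)"
      by (subst sum.atMost_Suc_shift) simp
    then show ?thesis unfolding EE_def by simp
  qed
  have s3: "EE (Suc m) p = - A + EE m p"
    unfolding s1 pw sum.distrib A_def sum_negf s2[symmetric] by simp
  have s4: "EE m (\<lambda>j. p (Suc j) - p j) = A - EE m p"
    unfolding EE_def A_def by (simp add: sum_subtractf ring_distribs)
  show ?thesis unfolding s3 s4 by simp
qed

lemma EE_zero: "EE m (\<lambda>j. 0) = 0"
  unfolding EE_def by simp

lemma EE_cmult: "EE m (\<lambda>j. c * p j) = c * EE m p"
  unfolding EE_def by (simp add: sum_distrib_left algebra_simps)

lemma EE_poch:
  "EE m (\<lambda>j. pochhammer (b + of_nat j) k) =
     (-1)^m * (if m \<le> k then fact k / fact (k - m) * pochhammer (b + of_nat m) (k - m) else 0)"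
proof (induction m arbitrary: b k)
  case 0
  then show ?case by (simp add: EE_def)
next
  case (Suc m)
  show ?case
  proof (cases k)
    case 0
    then show ?thesis by (simp add: EE_Suc EE_zero)
  next
    case (Suc k')
    have d: "pochhammer (b + of_nat (Suc j)) k - pochhammer (b + of_nat j) k
        = of_nat k * pochhammer (b + 1 + of_nat j) k'" for j
    proof -
      define Q where "Q = pochhammer (b + 1 + of_nat j) k'"
      have e1: "pochhammer (b + of_nat (Suc j)) (Suc k') = Q * (b + 1 + of_nat j + of_nat k')"
        unfolding Q_def pochhammer_Suc by (simp add: add_ac)
      have e2: "pochhammer (b + of_nat j) (Suc k') = (b + of_nat j) * Q"
        unfolding Q_def pochhammer_rec by (simp add: add_ac)
      have "Q * (b + 1 + of_nat j + of_nat k') - (b + of_nat j) * Q = of_nat (Suc k') * Q"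
        by (simp add: algebra_simps)
      then show ?thesis unfolding Suc e1 e2 Q_def .
    qed
    have "EE (Suc m) (\<lambda>j. pochhammer (b + of_nat j) k) = - (of_nat k * EE m (\<lambda>j. pochhammer (b + 1 + of_nat j) k'))"
      by (simp only: EE_Suc d EE_cmult)
    also have "\<dots> = (-1)^(Suc m) * (if Suc m \<le> k then fact k / fact (k - Suc m) * pochhammer (b + of_nat (Suc m)) (k - Suc m) else 0)"
      unfolding Suc.IH using Suc by (simp add: fact_Suc add_ac)
    finally show ?thesis .
  qed
qed

lemma EE_choose: "EE k (\<lambda>m. of_nat (m choose j)) = (if k = j then (-1)^k else 0)"
proof (induction k arbitrary: j)
  case 0
  then show ?case by (simp add: EE_def)
next
  case (Suc k)
  show ?case
  proof (cases j)
    case 0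
    then show ?thesis by (simp add: EE_Suc EE_zero)
  next
    case (Suc j')
    have d: "(\<lambda>m. of_nat (Suc m choose j) - of_nat (m choose j) :: real) = (\<lambda>m. of_nat (m choose j'))"
      unfolding Suc by simp
    show ?thesis unfolding EE_Suc d Suc.IH using Suc by simp
  qed
qed

definition Lm :: "real \<Rightarrow> nat \<Rightarrow> nat \<Rightarrow> real" where
  "Lm a j m = of_nat (j choose m) * pochhammer a j / pochhammer a m"
definition Mi :: "real \<Rightarrow> nat \<Rightarrow> nat \<Rightarrow> real" where
  "Mi a m j = (-1)^(m+j) * of_nat (m choose j) * pochhammer a m / pochhammer a j"
definition DD :: "real \<Rightarrow> nat \<Rightarrow> real" where
  "DD a m = fact m * pochhammer a m"

lemma Inv:
  assumes a: "a > 0" and jn: "j \<le> n" and kn: "k \<le> n"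
  shows "(\<Sum>m\<le>n. Mi a m j * Lm a k m) = (if j = k then 1 else 0)"
proof -
  have pos: "pochhammer a i > 0" for i using a by (simp add: pochhammer_pos)
  have "(\<Sum>m\<le>n. Mi a m j * Lm a k m) = (\<Sum>m\<le>k. Mi a m j * Lm a k m)"
    by (rule sum.mono_neutral_right) (auto simp: kn Lm_def)
  also have "\<dots> = (\<Sum>m\<le>k. pochhammer a k / pochhammer a j * (-1)^j * ((-1)^m * of_nat (k choose m) * of_nat (m choose j)))"
  proof (rule sum.cong[OF refl])
    fix m
    have "pochhammer a m \<noteq> 0" using pos[of m] by simp
    then show "Mi a m j * Lm a k m = pochhammer a k / pochhammer a j * (-1)^j * ((-1)^m * of_nat (k choose m) * of_nat (m choose j))"
      unfolding Mi_def Lm_def by (simp add: power_add field_simps)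
  qed
  also have "\<dots> = pochhammer a k / pochhammer a j * (-1)^j * EE k (\<lambda>m. of_nat (m choose j))"
    unfolding EE_def sum_distrib_left by (simp add: mult.assoc)
  also have "\<dots> = (if j = k then 1 else 0)"
    unfolding EE_choose using pos[of k] by (auto simp: power_add[symmetric])
  finally show ?thesis .
qed

lemma I1:
  assumes a: "a > 0" and mn: "m \<le> n"
  shows "(\<Sum>j\<le>n. Mi a m j * pochhammer a (j + k)) = DD a m * Lm a k m"
proof -
  have pos: "pochhammer a i > 0" for i using a by (simp add: pochhammer_pos)
  have "(\<Sum>j\<le>n. Mi a m j * pochhammer a (j + k)) = (\<Sum>j\<le>m. Mi a m j * pochhammer a (j + k))"
    by (rule sum.mono_neutral_right) (auto simp: mn Mi_def)
  also have "\<dots> = (\<Sum>j\<le>m. (-1)^m * pochhammer a m * ((-1)^j * of_nat (m choose j) * pochhammer (a + of_nat j) k))"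
  proof (rule sum.cong[OF refl])
    fix j
    have "pochhammer a j \<noteq> 0" using pos[of j] by simp
    then show "Mi a m j * pochhammer a (j + k) = (-1)^m * pochhammer a m * ((-1)^j * of_nat (m choose j) * pochhammer (a + of_nat j) k)"
      unfolding Mi_def pochhammer_product' by (simp add: power_add field_simps)
  qed
  also have "\<dots> = (-1)^m * pochhammer a m * EE m (\<lambda>j. pochhammer (a + of_nat j) k)"
    unfolding EE_def sum_distrib_left by simp
  also have "\<dots> = pochhammer a m * (if m \<le> k then fact k / fact (k - m) * pochhammer (a + of_nat m) (k - m) else 0)"
    unfolding EE_poch by (simp add: power_add[symmetric])
  also have "\<dots> = DD a m * Lm a k m"
  proof (cases "m \<le> k")
    case True
    have pp: "pochhammer a k = pochhammer a m * pochhammer (a + of_nat m) (k - m)"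
      using True by (rule pochhammer_product)
    have bf: "(of_nat (k choose m) :: real) = fact k / (fact m * fact (k - m))"
      using True by (rule binomial_fact)
    have "pochhammer a m \<noteq> 0" using pos[of m] by simp
    then show ?thesis using True unfolding DD_def Lm_def pp bf by (simp add: field_simps)
  next
    case False
    then show ?thesis by (simp add: DD_def Lm_def)
  qed
  finally show ?thesis .
qed


lemma sumsq_le: "(\<Sum>j\<in>A. (v j)^2) \<le> (\<Sum>j\<in>A. \<bar>v j\<bar>)^2" if "finite A" for v :: "nat \<Rightarrow> real"
proof -
  have "(\<Sum>j\<in>A. \<bar>v j\<bar>)^2 = (\<Sum>i\<in>A. \<Sum>j\<in>A. \<bar>v i\<bar> * \<bar>v j\<bar>)"
    by (simp add: power2_eq_square sum_product)
  moreover have "(v i)^2 \<le> (\<Sum>j\<in>A. \<bar>v i\<bar> * \<bar>v j\<bar>)" if "i \<in> A" for i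
  proof -
    have "(v i)^2 = \<bar>v i\<bar> * \<bar>v i\<bar>" by (simp add: power2_eq_square)
    also have "\<dots> \<le> (\<Sum>j\<in>A. \<bar>v i\<bar> * \<bar>v j\<bar>)"
      by (rule member_le_sum[of i A "\<lambda>j. \<bar>v i\<bar> * \<bar>v j\<bar>"]) (use that \<open>finite A\<close> in auto)
    finally show ?thesis .
  qed
  ultimately show ?thesis by (simp add: sum_mono)
qed

lemma cs_sum:
  fixes x y :: "nat \<Rightarrow> real"
  assumes "finite A"
  shows "(\<Sum>i\<in>A. x i * y i)^2 \<le> (\<Sum>i\<in>A. (x i)^2) * (\<Sum>i\<in>A. (y i)^2)"
proof -
  have pw: "(x i * y j - x j * y i)^2 = (x i)^2 * (y j)^2 + (y i)^2 * (x j)^2 - 2 * ((x i * y i) * (x j * y j))" for i j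
    by (simp add: power2_eq_square algebra_simps)
  have "0 \<le> (\<Sum>i\<in>A. \<Sum>j\<in>A. (x i * y j - x j * y i)^2)"
    by (intro sum_nonneg) auto
  also have "\<dots> = (\<Sum>i\<in>A. \<Sum>j\<in>A. (x i)^2 * (y j)^2) + (\<Sum>i\<in>A. \<Sum>j\<in>A. (y i)^2 * (x j)^2)
      - 2 * (\<Sum>i\<in>A. \<Sum>j\<in>A. (x i * y i) * (x j * y j))"
    unfolding pw by (simp add: sum.distrib sum_subtractf sum_distrib_left)
  also have "\<dots> = 2 * ((\<Sum>i\<in>A. (x i)^2) * (\<Sum>i\<in>A. (y i)^2)) - 2 * (\<Sum>i\<in>A. x i * y i)^2"
    by (simp add: sum_product[symmetric] power2_eq_square)
  finally show ?thesis by simp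
qed

lemma cs_weighted:
  fixes c w d :: "nat \<Rightarrow> real"
  assumes "finite A" "\<And>i. i \<in> A \<Longrightarrow> d i > 0"
  shows "(\<Sum>i\<in>A. c i * w i)^2 \<le> (\<Sum>i\<in>A. (c i)^2 / d i) * (\<Sum>i\<in>A. d i * (w i)^2)"
proof -
  have "(\<Sum>i\<in>A. (c i / sqrt (d i)) * (sqrt (d i) * w i))^2
     \<le> (\<Sum>i\<in>A. (c i / sqrt (d i))^2) * (\<Sum>i\<in>A. (sqrt (d i) * w i)^2)"
    by (rule cs_sum[OF assms(1)])
  moreover have "(\<Sum>i\<in>A. (c i / sqrt (d i)) * (sqrt (d i) * w i)) = (\<Sum>i\<in>A. c i * w i)"
  proof (rule sum.cong[OF refl])
    fix i assume "i \<in> A"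
    then have "d i > 0" by (rule assms(2))
    then show "(c i / sqrt (d i)) * (sqrt (d i) * w i) = c i * w i" by simp
  qed
  moreover have "(\<Sum>i\<in>A. (c i / sqrt (d i))^2) = (\<Sum>i\<in>A. (c i)^2 / d i)"
  proof (rule sum.cong[OF refl])
    fix i assume "i \<in> A"
    then have "d i > 0" by (rule assms(2))
    then show "(c i / sqrt (d i))^2 = (c i)^2 / d i" by (simp add: power_divide)
  qed
  moreover have "(\<Sum>i\<in>A. (sqrt (d i) * w i)^2) = (\<Sum>i\<in>A. d i * (w i)^2)"
  proof (rule sum.cong[OF refl])
    fix i assume "i \<in> A"
    then have "d i > 0" by (rule assms(2))
    then show "(sqrt (d i) * w i)^2 = d i * (w i)^2" by (simp add: power_mult_distrib)
  qed
  ultimately show ?thesis by simp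
qed

lemma Cabs:
  assumes a: "a > 0" and mn: "m \<le> n"
  shows "(\<Sum>j\<le>n. \<bar>Mi a m j\<bar>) = fact m * FF a m 1"
proof -
  have pos: "pochhammer a i > 0" for i using a by (simp add: pochhammer_pos)
  have "(\<Sum>j\<le>n. \<bar>Mi a m j\<bar>) = (\<Sum>j\<le>m. \<bar>Mi a m j\<bar>)"
    by (rule sum.mono_neutral_right) (auto simp: mn Mi_def)
  also have "\<dots> = (\<Sum>j\<le>m. fact m * cc a m j)"
  proof (rule sum.cong[OF refl])
    fix j assume "j \<in> {..m}"
    then have j: "j \<le> m" by simp
    have pp: "pochhammer a m = pochhammer a j * pochhammer (a + of_nat j) (m - j)"
      using j by (rule pochhammer_product)
    have bf: "(of_nat (m choose j) :: real) = fact m / (fact j * fact (m - j))"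
      using j by (rule binomial_fact)
    have "\<bar>Mi a m j\<bar> = of_nat (m choose j) * pochhammer a m / pochhammer a j"
      unfolding Mi_def using pos[of m] pos[of j] by (simp add: abs_mult)
    also have "\<dots> = fact m * cc a m j"
      unfolding cc_def bf pp using j pos[of j] by (simp add: field_simps)
    finally show "\<bar>Mi a m j\<bar> = fact m * cc a m j" .
  qed
  also have "\<dots> = fact m * FF a m 1"
    unfolding FF_def by (simp add: sum_distrib_left)
  finally show ?thesis .
qed



lemma quad_bound:
  fixes v :: "nat \<Rightarrow> real"
  assumes a: "a > 0"
  shows "(\<Sum>j\<le>n. (v j)^2) \<le> (\<Sum>m\<le>n. (fact m * FF a m 1)^2 / DD a m) *
           (\<Sum>j\<le>n. \<Sum>k\<le>n. v j * pochhammer a (j + k) * v k)"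
proof -
  have pos: "pochhammer a i > 0" for i using a by (simp add: pochhammer_pos)
  have Dpos: "DD a m > 0" for m unfolding DD_def using pos[of m] by simp
  define u where "u m = (\<Sum>k\<le>n. Lm a k m * v k)" for m
  have vA: "v j = (\<Sum>m\<le>n. Mi a m j * u m)" if j: "j \<le> n" for j
  proof -
    have "(\<Sum>m\<le>n. Mi a m j * u m) = (\<Sum>m\<le>n. \<Sum>k\<le>n. Mi a m j * Lm a k m * v k)"
      unfolding u_def by (simp add: sum_distrib_left mult.assoc)
    also have "\<dots> = (\<Sum>k\<le>n. \<Sum>m\<le>n. Mi a m j * Lm a k m * v k)"
      by (rule sum.swap)
    also have "\<dots> = (\<Sum>k\<le>n. (\<Sum>m\<le>n. Mi a m j * Lm a k m) * v k)"
      by (simp add: sum_distrib_right)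
    also have "\<dots> = (\<Sum>k\<le>n. (if j = k then 1 else 0) * v k)"
      by (rule sum.cong[OF refl]) (simp add: Inv[OF a j])
    also have "\<dots> = (\<Sum>k\<le>n. if j = k then v j else 0)"
      by (rule sum.cong) auto
    also have "\<dots> = v j" using j by (subst sum.delta') auto
    finally show ?thesis by simp
  qed
  define Q where "Q = (\<Sum>j\<le>n. \<Sum>k\<le>n. v j * pochhammer a (j + k) * v k)"
  have QB: "Q = (\<Sum>m\<le>n. DD a m * (u m)^2)"
  proof -
    have "Q = (\<Sum>j\<le>n. \<Sum>k\<le>n. (\<Sum>m\<le>n. Mi a m j * u m) * pochhammer a (j + k) * v k)"
      unfolding Q_def by (rule sum.cong[OF refl]) (simp add: vA)
    also have "\<dots> = (\<Sum>j\<le>n. \<Sum>k\<le>n. \<Sum>m\<le>n. Mi a m j * pochhammer a (j + k) * (u m * v k))"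
      by (simp only: sum_distrib_right) (simp add: mult_ac)
    also have "\<dots> = (\<Sum>j\<le>n. \<Sum>m\<le>n. \<Sum>k\<le>n. Mi a m j * pochhammer a (j + k) * (u m * v k))"
      by (rule sum.cong[OF refl]) (rule sum.swap)
    also have "\<dots> = (\<Sum>m\<le>n. \<Sum>j\<le>n. \<Sum>k\<le>n. Mi a m j * pochhammer a (j + k) * (u m * v k))"
      by (rule sum.swap)
    also have "\<dots> = (\<Sum>m\<le>n. \<Sum>k\<le>n. \<Sum>j\<le>n. Mi a m j * pochhammer a (j + k) * (u m * v k))"
      by (rule sum.cong[OF refl]) (rule sum.swap)
    also have "\<dots> = (\<Sum>m\<le>n. \<Sum>k\<le>n. (\<Sum>j\<le>n. Mi a m j * pochhammer a (j + k)) * (u m * v k))"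
      by (simp add: sum_distrib_right)
    also have "\<dots> = (\<Sum>m\<le>n. \<Sum>k\<le>n. DD a m * Lm a k m * (u m * v k))"
      by (intro sum.cong refl) (simp add: I1[OF a])
    also have "\<dots> = (\<Sum>m\<le>n. DD a m * u m * (\<Sum>k\<le>n. Lm a k m * v k))"
      by (simp add: sum_distrib_left mult_ac)
    also have "\<dots> = (\<Sum>m\<le>n. DD a m * (u m)^2)"
      unfolding u_def by (simp add: power2_eq_square mult_ac)
    finally show ?thesis .
  qed
  define C where "C m = fact m * FF a m 1" for m
  have Cm: "C m = (\<Sum>j\<le>n. \<bar>Mi a m j\<bar>)" if "m \<le> n" for m
    unfolding C_def using Cabs[OF a that] by simp
  have absv: "(\<Sum>j\<le>n. \<bar>v j\<bar>) \<le> (\<Sum>m\<le>n. C m * \<bar>u m\<bar>)"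
  proof -
    have "(\<Sum>j\<le>n. \<bar>v j\<bar>) \<le> (\<Sum>j\<le>n. \<Sum>m\<le>n. \<bar>Mi a m j\<bar> * \<bar>u m\<bar>)"
    proof (rule sum_mono)
      fix j assume "j \<in> {..n}"
      then have "v j = (\<Sum>m\<le>n. Mi a m j * u m)" using vA by simp
      then have "\<bar>v j\<bar> \<le> (\<Sum>m\<le>n. \<bar>Mi a m j * u m\<bar>)" by (simp add: sum_abs)
      then show "\<bar>v j\<bar> \<le> (\<Sum>m\<le>n. \<bar>Mi a m j\<bar> * \<bar>u m\<bar>)" by (simp add: abs_mult)
    qed
    also have "\<dots> = (\<Sum>m\<le>n. \<Sum>j\<le>n. \<bar>Mi a m j\<bar> * \<bar>u m\<bar>)"
      by (rule sum.swap)
    also have "\<dots> = (\<Sum>m\<le>n. C m * \<bar>u m\<bar>)"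
      by (rule sum.cong[OF refl]) (simp add: Cm sum_distrib_right)
    finally show ?thesis .
  qed
  have "(\<Sum>j\<le>n. (v j)^2) \<le> (\<Sum>j\<le>n. \<bar>v j\<bar>)^2"
    by (rule sumsq_le) simp
  also have "\<dots> \<le> (\<Sum>m\<le>n. C m * \<bar>u m\<bar>)^2"
    by (rule power_mono[OF absv]) (simp add: sum_nonneg)
  also have "\<dots> \<le> (\<Sum>m\<le>n. (C m)^2 / DD a m) * (\<Sum>m\<le>n. DD a m * (\<bar>u m\<bar>)^2)"
    by (rule cs_weighted) (auto simp: Dpos)
  also have "\<dots> = (\<Sum>m\<le>n. (fact m * FF a m 1)^2 / DD a m) * Q"
    unfolding QB C_def by simp
  finally show ?thesis unfolding Q_def .
qed


theorem mainTheorem3: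
  fixes a :: real and n :: nat
  assumes "a > -1"
  shows "(\<forall>l. eigenvalue (hankel_poch a n) l \<longrightarrow>
            l \<ge> 1 / (\<Sum>m = 0..n. fact m / pochhammer (a + 1) m * (laguerre (int m) a (-1))^2))
       \<and> 1 / (\<Sum>m = 0..n. fact m / pochhammer (a + 1) m * (laguerre (int m) a (-1))^2)
         = pochhammer (a + 1) n / fact (n + 1) *
           (1 / (laguerre (int n) (a + 1) (-1) * laguerre (int n) a (-1)
                 - laguerre (int n + 1) a (-1) * laguerre (int n - 1) (a + 1) (-1)))"
proof -
  define b where "b = a + 1"
  have b: "b > 0" unfolding b_def using assms by simp
  have pos: "pochhammer b i > 0" for i using b by (simp add: pochhammer_pos)
  have lagA: "laguerre (int m) a (-1) = FF b m 1" for m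
    using lag_FF[OF b, of m "-1"] unfolding b_def by simp
  have lagB: "laguerre (int m) (a + 1) (-1) = FF (b + 1) m 1" for m
  proof -
    have "laguerre (int m) (b + 1 - 1) (-1) = FF (b + 1) m 1"
      using lag_FF[of "b + 1" m "-1"] b by simp
    then show ?thesis unfolding b_def by (simp add: add.commute)
  qed
  define S where "S = (\<Sum>m = 0..n. fact m / pochhammer (a + 1) m * (laguerre (int m) a (-1))^2)"
  have S1: "S = (\<Sum>m\<le>n. fact m / pochhammer b m * (FF b m 1)^2)"
    unfolding S_def lagA b_def atLeast0AtMost ..
  have S2: "S = (\<Sum>m\<le>n. (fact m * FF b m 1)^2 / DD b m)"
    unfolding S1
  proof (rule sum.cong[OF refl])
    fix m
    have "pochhammer b m \<noteq> 0" using pos[of m] by simp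
    then show "fact m / pochhammer b m * (FF b m 1)^2 = (fact m * FF b m 1)^2 / DD b m"
      unfolding DD_def by (simp add: power2_eq_square field_simps)
  qed
  have Snn: "S \<ge> 0" unfolding S1
    by (intro sum_nonneg mult_nonneg_nonneg divide_nonneg_pos) (auto simp: pos)
  have part1: "l \<ge> 1 / S" if ev: "eigenvalue (hankel_poch a n) l" for l
  proof -
    from ev obtain v where v: "v \<in> carrier_vec (n + 1)" "v \<noteq> 0\<^sub>v (n + 1)"
      and eq: "hankel_poch a n *\<^sub>v v = l \<cdot>\<^sub>v v"
      unfolding eigenvalue_def eigenvector_def hankel_poch_def by auto
    define w where "w j = v $ j" for j
    have dv: "dim_vec v = n + 1" using v by simp
    have rowj: "(\<Sum>k\<le>n. pochhammer b (j + k) * w k) = l * w j" if "j \<le> n" for j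
    proof -
      have "(hankel_poch a n *\<^sub>v v) $ j = (l \<cdot>\<^sub>v v) $ j" using eq by simp
      moreover have "(hankel_poch a n *\<^sub>v v) $ j = (\<Sum>k\<le>n. pochhammer b (j + k) * w k)"
        using that dv unfolding hankel_poch_def w_def b_def
        by (simp add: scalar_prod_def atLeast0LessThan lessThan_Suc_atMost)
      moreover have "(l \<cdot>\<^sub>v v) $ j = l * w j" using that dv unfolding w_def by simp
      ultimately show ?thesis by simp
    qed
    have Q: "(\<Sum>j\<le>n. \<Sum>k\<le>n. w j * pochhammer b (j + k) * w k) = l * (\<Sum>j\<le>n. (w j)^2)"
    proof -
      have "(\<Sum>j\<le>n. \<Sum>k\<le>n. w j * pochhammer b (j + k) * w k) = (\<Sum>j\<le>n. w j * (\<Sum>k\<le>n. pochhammer b (j + k) * w k))"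
        by (simp add: sum_distrib_left mult_ac)
      also have "\<dots> = (\<Sum>j\<le>n. w j * (l * w j))"
        by (rule sum.cong[OF refl]) (simp add: rowj)
      also have "\<dots> = l * (\<Sum>j\<le>n. (w j)^2)"
        by (simp add: sum_distrib_left power2_eq_square mult_ac)
      finally show ?thesis .
    qed
    have nz: "(\<Sum>j\<le>n. (w j)^2) > 0"
    proof -
      obtain j where j: "j < n + 1" "v $ j \<noteq> 0"
        using v by (metis dim_vec eq_vecI index_zero_vec(1) index_zero_vec(2) carrier_vecD)
      have "(w j)^2 > 0" using j unfolding w_def by simp
      moreover have "(w j)^2 \<le> (\<Sum>j\<le>n. (w j)^2)"
        by (rule member_le_sum) (use j in auto)
      ultimately show ?thesis by linarith
    qed
    have "(\<Sum>j\<le>n. (w j)^2) \<le> S * (l * (\<Sum>j\<le>n. (w j)^2))"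
      using quad_bound[OF b, where v=w and n=n] unfolding S2[symmetric] Q .
    then have "1 * (\<Sum>j\<le>n. (w j)^2) \<le> (S * l) * (\<Sum>j\<le>n. (w j)^2)" by (simp add: mult_ac)
    then have Sl: "1 \<le> S * l" using nz by (simp add: mult_le_cancel_right)
    then have "S > 0" using Snn by (cases "S = 0") auto
    then show ?thesis using Sl by (simp add: field_simps)
  qed
  have part2: "1 / S = pochhammer (a + 1) n / fact (n + 1) *
           (1 / (laguerre (int n) (a + 1) (-1) * laguerre (int n) a (-1)
                 - laguerre (int n + 1) a (-1) * laguerre (int n - 1) (a + 1) (-1)))"
  proof -
    have l1: "laguerre (int n + 1) a (-1) = FF b (Suc n) 1"
      using lagA[of "Suc n"] by (simp add: add.commute)
    have l2: "laguerre (int n - 1) (a + 1) (-1) = (if n = 0 then 0 else FF (b + 1) (n - 1) 1)"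
    proof (cases n)
      case 0 then show ?thesis by (simp add: laguerre_def)
    next
      case (Suc k)
      then have "int n - 1 = int k" by simp
      then show ?thesis using lagB[of k] Suc by simp
    qed
    have "S = fact (Suc n) / pochhammer b n * (FF (b+1) n 1 * FF b n 1 - FF b (Suc n) 1 * (if n = 0 then 0 else FF (b+1) (n-1) 1))"
      unfolding S1 by (rule CD_sum[OF b])
    moreover have "laguerre (int n) (a + 1) (-1) * laguerre (int n) a (-1)
                 - laguerre (int n + 1) a (-1) * laguerre (int n - 1) (a + 1) (-1)
       = FF (b+1) n 1 * FF b n 1 - FF b (Suc n) 1 * (if n = 0 then 0 else FF (b+1) (n-1) 1)"
      by (simp only: l1 l2 lagA lagB)
    moreover have "pochhammer (a + 1) n = pochhammer b n" unfolding b_def ..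
    moreover have gen: "1 / (f / p * X) = p / f * (1 / X)" for f p X :: real
      by (simp add: divide_inverse mult_ac)
    ultimately show ?thesis by (simp only: gen Suc_eq_plus1)
  qed
  show ?thesis using part1 part2 unfolding S_def by blast
qed

end
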